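(* Let $\mathcal{N}=(N,M_0)$ be a two-level PT-net system with transitions partitioned into low-level $L$ and high-level $H$. Then $\mathcal{N}$ has the property SBNDC if and only if for every reachable marking $M_1$ of $\mathcal{N}$ and every $h\in H$, $M_1[h\rangle M_2$ implies $\mathcal{L}(N\setminus H,M_1)=\mathcal{L}(N\setminus H,M_2)$.
   Context: A PT-net is $N=(P,T,F)$ with $P,T$ finite disjoint and $F:(P\times T)\cup(T\times P)\to\mathbb{N}$; markings $M:P\to\mathbb{N}$; $t$ enabled at $M$ ($M[t\rangle$) iff $M(p)\ge F(p,t)$ for all $p$, firing gives $M'(p)=M(p)+F(t,p)-F(p,t)$ ($M[t\rangle M'$); extended to sequences. Reachable markings are those $M$ with $M_0[s\rangle M$. $N\setminus H$ deletes the transitions of $H$. $\mathcal{L}(N\setminus H,M)$ is the set of all $s\in L^*$ with $M[s\rangle$ in $N\setminus H$. Two net systems all of whose transitions are observable are weakly bisimilar if there is a relation $R$ between their reachable markings containing the initial pair such that for $(M,M')\in R$ each step $M[t\rangle M''$ is matched by $M'[t\rangle M'''$ with $(M'',M''')\in R$, and symmetrically. SBNDC: for every reachable marking $M_1$ of $\mathcal{N}$ and every $h\in H$, $M_1[h\rangle M_2$ implies that $(N\setminus H,M_1)$ and $(N\setminus H,M_2)$ are weakly bisimilar. *)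

theory Defs
  imports Main
begin

text \<open>PT-nets N = (P,T,F). Places have type 'p, transitions type 't (so P and T
are automatically disjoint). F is split into its two halves F(p,t) and F(t,p).\<close>

record ('p,'t) ptnet =
  places :: "'p set"
  trans  :: "'t set"
  pre    :: "'p \<Rightarrow> 't \<Rightarrow> nat"
  post   :: "'t \<Rightarrow> 'p \<Rightarrow> nat"

type_synonym 'p marking = "'p \<Rightarrow> nat"

definition wf_net :: "('p,'t) ptnet \<Rightarrow> bool" where
  "wf_net N \<longleftrightarrow> finite (places N) \<and> finite (trans N)
     \<and> (\<forall>p t. (p \<notin> places N \<or> t \<notin> trans N) \<longrightarrow> pre N p t = 0 \<and> post N t p = 0)"

definition fire :: "('p,'t) ptnet \<Rightarrow> 'p marking \<Rightarrow> 't \<Rightarrow> 'p marking \<Rightarrow> bool" where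
  "fire N M t M' \<longleftrightarrow> t \<in> trans N \<and> (\<forall>p \<in> places N. pre N p t \<le> M p)
     \<and> M' = (\<lambda>p. M p + post N t p - pre N p t)"

inductive fire_seq :: "('p,'t) ptnet \<Rightarrow> 'p marking \<Rightarrow> 't list \<Rightarrow> 'p marking \<Rightarrow> bool" where
  Nil: "fire_seq N M [] M"
| Cons: "fire N M t M' \<Longrightarrow> fire_seq N M' s M'' \<Longrightarrow> fire_seq N M (t # s) M''"

definition reachable :: "('p,'t) ptnet \<Rightarrow> 'p marking \<Rightarrow> 'p marking \<Rightarrow> bool" where
  "reachable N M0 M \<longleftrightarrow> (\<exists>s. fire_seq N M0 s M)"

definition net_del :: "('p,'t) ptnet \<Rightarrow> 't set \<Rightarrow> ('p,'t) ptnet" where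
  "net_del N H = N\<lparr>trans := trans N - H\<rparr>"

definition lang :: "('p,'t) ptnet \<Rightarrow> 't set \<Rightarrow> 't set \<Rightarrow> 'p marking \<Rightarrow> 't list set" where
  "lang N L H M = {s. set s \<subseteq> L \<and> (\<exists>M'. fire_seq (net_del N H) M s M')}"

text \<open>Weak bisimilarity of net systems all of whose transitions are observable
  (hence matching is step-by-step), relating reachable markings.\<close>
definition weakly_bisimilar ::
  "('p,'t) ptnet \<Rightarrow> 'p marking \<Rightarrow> ('p,'t) ptnet \<Rightarrow> 'p marking \<Rightarrow> bool" where
  "weakly_bisimilar N1 M1 N2 M2 \<longleftrightarrow> (\<exists>R. (M1, M2) \<in> R \<and>
     (\<forall>(A, B) \<in> R. reachable N1 M1 A \<and> reachable N2 M2 B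
        \<and> (\<forall>t A'. fire N1 A t A' \<longrightarrow> (\<exists>B'. fire N2 B t B' \<and> (A', B') \<in> R))
        \<and> (\<forall>t B'. fire N2 B t B' \<longrightarrow> (\<exists>A'. fire N1 A t A' \<and> (A', B') \<in> R))))"

definition two_level :: "('p,'t) ptnet \<Rightarrow> 't set \<Rightarrow> 't set \<Rightarrow> bool" where
  "two_level N L H \<longleftrightarrow> L \<union> H = trans N \<and> L \<inter> H = {}"

definition SBNDC :: "('p,'t) ptnet \<Rightarrow> 'p marking \<Rightarrow> 't set \<Rightarrow> bool" where
  "SBNDC N M0 H \<longleftrightarrow> (\<forall>M1 h M2. reachable N M0 M1 \<and> h \<in> H \<and> fire N M1 h M2 \<longrightarrow>
      weakly_bisimilar (net_del N H) M1 (net_del N H) M2)"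

end

theory Submission
  imports Defs
begin

lemma fire_det: "fire N M t A \<Longrightarrow> fire N M t B \<Longrightarrow> A = B"
  by (simp add: fire_def)

lemma fire_seq_det: "fire_seq N M s A \<Longrightarrow> fire_seq N M s B \<Longrightarrow> A = B"
proof (induction arbitrary: B rule: fire_seq.induct)
  case (Nil N M) then show ?case by (cases rule: fire_seq.cases) auto
next
  case (Cons N M t M' s M'')
  from Cons.prems obtain M2 where "fire N M t M2" "fire_seq N M2 s B"
    by (cases rule: fire_seq.cases) auto
  with Cons.hyps(1) fire_det have "M2 = M'" by metis
  with Cons.IH \<open>fire_seq N M2 s B\<close> show ?case by simp
qed

lemma fire_seq_Cons_iff: "fire_seq N M (a # s) M'' \<longleftrightarrow> (\<exists>M1. fire N M a M1 \<and> fire_seq N M1 s M'')"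
  by (auto intro: fire_seq.Cons elim: fire_seq.cases)
lemma fire_seq_Nil_iff: "fire_seq N M [] M'' \<longleftrightarrow> M'' = M"
  by (auto intro: fire_seq.Nil elim: fire_seq.cases)

lemma fire_seq_append:
  "fire_seq N M (s @ u) M'' \<longleftrightarrow> (\<exists>M'. fire_seq N M s M' \<and> fire_seq N M' u M'')"
  by (induction s arbitrary: M) (auto simp: fire_seq_Cons_iff fire_seq_Nil_iff)

lemma fire_seq_trans: "fire_seq N M s M' \<Longrightarrow> set s \<subseteq> trans N"
  by (induction rule: fire_seq.induct) (auto simp: fire_def)

lemma fire_seq_single: "fire_seq N M [t] M' \<longleftrightarrow> fire N M t M'"
  by (simp add: fire_seq_Cons_iff fire_seq_Nil_iff)

lemma bisim_traces:
  assumes R: "\<forall>(A, B) \<in> R. (\<forall>t A'. fire N A t A' \<longrightarrow> (\<exists>B'. fire N B t B' \<and> (A', B') \<in> R))"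
  shows "(A, B) \<in> R \<Longrightarrow> fire_seq N A s A' \<Longrightarrow> \<exists>B'. fire_seq N B s B'"
proof (induction s arbitrary: A B)
  case Nil then show ?case by (auto intro: fire_seq.Nil)
next
  case (Cons a s)
  from Cons.prems(2) obtain A1 where A1: "fire N A a A1" "fire_seq N A1 s A'"
    unfolding fire_seq_Cons_iff by blast
  from bspec[OF R Cons.prems(1)] have "\<forall>t A'. fire N A t A' \<longrightarrow> (\<exists>B'. fire N B t B' \<and> (A', B') \<in> R)"
    by simp
  with A1(1) obtain B1 where B1: "fire N B a B1" "(A1, B1) \<in> R" by blast
  from Cons.IH[OF B1(2) A1(2)] obtain B' where "fire_seq N B1 s B'" by blast
  from fire_seq.Cons[OF B1(1) this] show ?case by blast
qed

lemma bisim_lang: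
  assumes "weakly_bisimilar N1 M1 N1 M2"
  shows "(\<exists>A. fire_seq N1 M1 s A) \<longleftrightarrow> (\<exists>B. fire_seq N1 M2 s B)"
proof -
  from assms obtain R where R0: "(M1, M2) \<in> R" and
    R: "\<And>A B. (A, B) \<in> R \<Longrightarrow> (\<forall>t A'. fire N1 A t A' \<longrightarrow> (\<exists>B'. fire N1 B t B' \<and> (A', B') \<in> R))
        \<and> (\<forall>t B'. fire N1 B t B' \<longrightarrow> (\<exists>A'. fire N1 A t A' \<and> (A', B') \<in> R))"
    unfolding weakly_bisimilar_def by (auto simp: Ball_def)
  have R1: "\<forall>(A, B) \<in> R. (\<forall>t A'. fire N1 A t A' \<longrightarrow> (\<exists>B'. fire N1 B t B' \<and> (A', B') \<in> R))"
    using R by (simp add: Ball_def split_paired_all)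
  have R2: "\<forall>(A, B) \<in> R\<inverse>. (\<forall>t A'. fire N1 A t A' \<longrightarrow> (\<exists>B'. fire N1 B t B' \<and> (A', B') \<in> R\<inverse>))"
    using R by (simp add: Ball_def split_paired_all)
  from R0 have R0': "(M2, M1) \<in> R\<inverse>" by simp
  show ?thesis
    using bisim_traces[OF R1 R0] bisim_traces[OF R2 R0'] by blast
qed

lemma lang_eq_iff:
  assumes "\<And>s. (\<exists>A. fire_seq N1 M1 s A) \<longleftrightarrow> (\<exists>B. fire_seq N1 M2 s B)"
  shows "{s. set s \<subseteq> L \<and> (\<exists>A. fire_seq N1 M1 s A)} = {s. set s \<subseteq> L \<and> (\<exists>A. fire_seq N1 M2 s A)}"
  using assms by simp

lemma step_match:
  assumes key: "\<And>s. (\<exists>A. fire_seq ND M1 s A) \<longleftrightarrow> (\<exists>B. fire_seq ND M2 s B)"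
    and s1: "fire_seq ND M1 s A" and s2: "fire_seq ND M2 s B" and f: "fire ND A t A'"
  shows "\<exists>B'. fire ND B t B' \<and> fire_seq ND M1 (s @ [t]) A' \<and> fire_seq ND M2 (s @ [t]) B'"
proof -
  have "fire_seq ND A [t] A'" using f by (simp add: fire_seq_single)
  then have a: "fire_seq ND M1 (s @ [t]) A'"
    using s1 by (subst fire_seq_append) blast
  then obtain B'' where b: "fire_seq ND M2 (s @ [t]) B''" using key by blast
  then obtain B1 where "fire_seq ND M2 s B1" "fire_seq ND B1 [t] B''"
    by (subst (asm) fire_seq_append) blast
  then have "B1 = B" "fire ND B1 t B''" using s2 fire_seq_det by (auto simp: fire_seq_single)
  then show ?thesis using a b by blast
qed

theorem proposition5:
  fixes N :: "('p,'t) ptnet" and M0 :: "'p marking" and L H :: "'t set"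
  assumes "wf_net N" and "two_level N L H"
  shows "SBNDC N M0 H \<longleftrightarrow>
    (\<forall>M1 h M2. reachable N M0 M1 \<and> h \<in> H \<and> fire N M1 h M2 \<longrightarrow>
       lang N L H M1 = lang N L H M2)"
proof
  assume S: "SBNDC N M0 H"
  show "\<forall>M1 h M2. reachable N M0 M1 \<and> h \<in> H \<and> fire N M1 h M2 \<longrightarrow>
       lang N L H M1 = lang N L H M2"
  proof (intro allI impI)
    fix M1 h M2 assume "reachable N M0 M1 \<and> h \<in> H \<and> fire N M1 h M2"
    with S have "weakly_bisimilar (net_del N H) M1 (net_del N H) M2"
      unfolding SBNDC_def by blast
    from lang_eq_iff[OF bisim_lang[OF this]]
    show "lang N L H M1 = lang N L H M2"
      unfolding lang_def .
  qed
next
  assume E: "\<forall>M1 h M2. reachable N M0 M1 \<and> h \<in> H \<and> fire N M1 h M2 \<longrightarrow>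
       lang N L H M1 = lang N L H M2"
  define ND where "ND = net_del N H"
  have TL: "trans ND \<subseteq> L" using assms(2) by (auto simp: ND_def net_del_def two_level_def)
  show "SBNDC N M0 H"
    unfolding SBNDC_def
  proof (intro allI impI)
    fix M1 h M2 assume a: "reachable N M0 M1 \<and> h \<in> H \<and> fire N M1 h M2"
    with E have LE: "lang N L H M1 = lang N L H M2" by blast
    have lang_iff: "(\<exists>A. fire_seq ND M s A) \<longleftrightarrow> s \<in> lang N L H M" for M s
    proof
      assume "\<exists>A. fire_seq ND M s A"
      then obtain A where A: "fire_seq ND M s A" by blast
      have "set s \<subseteq> L" using fire_seq_trans[OF A] TL by (rule order_trans)
      then show "s \<in> lang N L H M" using A unfolding lang_def ND_def by blast
    qed (auto simp: lang_def ND_def)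
    have key: "(\<exists>A. fire_seq ND M1 s A) \<longleftrightarrow> (\<exists>B. fire_seq ND M2 s B)" for s
      unfolding lang_iff LE ..
    define R where "R = {(A, B). \<exists>s. fire_seq ND M1 s A \<and> fire_seq ND M2 s B}"
    have R0: "(M1, M2) \<in> R" unfolding R_def by (auto intro: fire_seq.Nil)
    have key': "(\<exists>A. fire_seq ND M2 s A) \<longleftrightarrow> (\<exists>B. fire_seq ND M1 s B)" for s
      using key by blast
    have RP: "reachable ND M1 A \<and> reachable ND M2 B
        \<and> (\<forall>t A'. fire ND A t A' \<longrightarrow> (\<exists>B'. fire ND B t B' \<and> (A', B') \<in> R))
        \<and> (\<forall>t B'. fire ND B t B' \<longrightarrow> (\<exists>A'. fire ND A t A' \<and> (A', B') \<in> R))"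
      if AB: "(A, B) \<in> R" for A B
    proof -
      from AB obtain s where s: "fire_seq ND M1 s A" "fire_seq ND M2 s B" unfolding R_def by blast
      have r: "reachable ND M1 A \<and> reachable ND M2 B" using s unfolding reachable_def by blast
      have f1: "\<exists>B'. fire ND B t B' \<and> (A', B') \<in> R" if "fire ND A t A'" for t A'
        using step_match[OF key s(1) s(2) that] unfolding R_def by blast
      have f2: "\<exists>A'. fire ND A t A' \<and> (A', B') \<in> R" if "fire ND B t B'" for t B'
        using step_match[OF key' s(2) s(1) that] unfolding R_def by blast
      show ?thesis using r f1 f2 by blast
    qed
    have "weakly_bisimilar ND M1 ND M2"
      unfolding weakly_bisimilar_def
    proof (intro exI[of _ R] conjI R0)
      show "\<forall>(A, B)\<in>R. reachable ND M1 A \<and> reachable ND M2 B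
        \<and> (\<forall>t A'. fire ND A t A' \<longrightarrow> (\<exists>B'. fire ND B t B' \<and> (A', B') \<in> R))
        \<and> (\<forall>t B'. fire ND B t B' \<longrightarrow> (\<exists>A'. fire ND A t A' \<and> (A', B') \<in> R))"
        using RP by (simp add: Ball_def split_paired_all)
    qed
    then show "weakly_bisimilar (net_del N H) M1 (net_del N H) M2"
      by (simp add: ND_def)
  qed
qed

end
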